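(* Let $\mathcal{S} \subseteq M_n$ be a quantum graph. Then $\mathcal{S}$ is connected if and only if the classical graph $C_v(\mathcal{S})$ is connected for every orthonormal basis $v=(|v_k\rangle)_{k=1}^n$ of $\mathbb{C}^n$.
   Context: $M_n$ denotes the $n\times n$ complex matrices. A quantum graph on $M_n$ is a linear subspace $\mathcal{S}\subseteq M_n$ closed under adjoints and containing $I_n$; it is connected if $\mathcal{S}^m=M_n$ for some $m\in\mathbb{N}$, where $\mathcal{S}^1=\mathcal{S}$ and $\mathcal{S}^{k+1}=\operatorname{span}\{AB: A\in\mathcal{S}^k, B\in\mathcal{S}\}$. For an ordered orthonormal basis $v=(|v_k\rangle)_{k=1}^n$ of $\mathbb{C}^n$, the confusability graph $C_v(\mathcal{S})$ is the classical graph on vertex set $\{1,\dots,n\}$ in which distinct $i,j$ are adjacent exactly when $\langle v_i|A|v_j\rangle\neq0$ for some $A\in\mathcal{S}$. *)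

theory Defs
  imports "Jordan_Normal_Form.Schur_Decomposition"
begin

inductive_set mat_span :: "nat \<Rightarrow> complex mat set \<Rightarrow> complex mat set"
  for n :: nat and T :: "complex mat set" where
  zero: "0\<^sub>m n n \<in> mat_span n T"
| gen: "A \<in> T \<Longrightarrow> A \<in> mat_span n T"
| add: "A \<in> mat_span n T \<Longrightarrow> B \<in> mat_span n T \<Longrightarrow> A + B \<in> mat_span n T"
| smult: "A \<in> mat_span n T \<Longrightarrow> c \<cdot>\<^sub>m A \<in> mat_span n T"

definition mat_subspace :: "nat \<Rightarrow> complex mat set \<Rightarrow> bool" where
  "mat_subspace n S \<longleftrightarrow> S \<subseteq> carrier_mat n n \<and> 0\<^sub>m n n \<in> S
     \<and> (\<forall>A\<in>S. \<forall>B\<in>S. A + B \<in> S) \<and> (\<forall>c. \<forall>A\<in>S. c \<cdot>\<^sub>m A \<in> S)"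

definition quantum_graph :: "nat \<Rightarrow> complex mat set \<Rightarrow> bool" where
  "quantum_graph n S \<longleftrightarrow> mat_subspace n S \<and> (\<forall>A\<in>S. mat_adjoint A \<in> S) \<and> 1\<^sub>m n \<in> S"

text \<open>Powers: qg_pow n S k is S^(k+1); S^1 = S, S^(k+1) = span {AB : A in S^k, B in S}.\<close>
fun qg_pow :: "nat \<Rightarrow> complex mat set \<Rightarrow> nat \<Rightarrow> complex mat set" where
  "qg_pow n S 0 = S"
| "qg_pow n S (Suc k) = mat_span n {A * B | A B. A \<in> qg_pow n S k \<and> B \<in> S}"

definition qg_connected :: "nat \<Rightarrow> complex mat set \<Rightarrow> bool" where
  "qg_connected n S \<longleftrightarrow> (\<exists>k. qg_pow n S k = carrier_mat n n)"

text \<open>Ordered orthonormal basis v_0, ..., v_(n-1) of C^n (n orthonormal vectors in C^n).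
  The inner product v \<bullet>c w = sum_i v_i conj(w_i).\<close>
definition orthonormal_basis :: "nat \<Rightarrow> (nat \<Rightarrow> complex vec) \<Rightarrow> bool" where
  "orthonormal_basis n v \<longleftrightarrow> (\<forall>k<n. v k \<in> carrier_vec n)
     \<and> (\<forall>i<n. \<forall>j<n. v j \<bullet>c v i = (if i = j then 1 else 0))"

text \<open>Edge relation of the confusability graph C_v(S) on vertices {0..<n}:
  i ~ j iff i \<noteq> j and <v_i|A|v_j> \<noteq> 0 for some A in S, where <v_i|A|v_j> = (A v_j) \<bullet>c v_i.\<close>
definition conf_edge :: "nat \<Rightarrow> (nat \<Rightarrow> complex vec) \<Rightarrow> complex mat set \<Rightarrow> nat \<Rightarrow> nat \<Rightarrow> bool" where
  "conf_edge n v S i j \<longleftrightarrow> i < n \<and> j < n \<and> i \<noteq> j \<and> (\<exists>A\<in>S. (A *\<^sub>v v j) \<bullet>c v i \<noteq> 0)"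

definition graph_connected :: "nat \<Rightarrow> (nat \<Rightarrow> nat \<Rightarrow> bool) \<Rightarrow> bool" where
  "graph_connected n E \<longleftrightarrow> (\<forall>i<n. \<forall>j<n. E\<^sup>*\<^sup>* i j)"

end

theory Submission
  imports Defs "Jordan_Normal_Form.Spectral_Radius"
begin


definition onf :: "nat \<Rightarrow> nat \<Rightarrow> (nat \<Rightarrow> complex vec) \<Rightarrow> bool" where
  "onf N m F \<longleftrightarrow> (\<forall>k<m. F k \<in> carrier_vec N) \<and> (\<forall>i<m. \<forall>j<m. F j \<bullet>c F i = (if i = j then 1 else 0))"

definition proj :: "nat \<Rightarrow> nat \<Rightarrow> (nat \<Rightarrow> complex vec) \<Rightarrow> complex vec \<Rightarrow> complex vec" where
  "proj N m F x = vec N (\<lambda>r. \<Sum>i<m. (x \<bullet>c F i) * (F i $ r))"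

lemma cip: assumes "x \<in> carrier_vec N" "y \<in> carrier_vec N"
  shows "x \<bullet>c y = (\<Sum>r<N. x$r * cnj (y$r))"
  using assms by (simp add: scalar_prod_def atLeast0LessThan)

lemma proj_carrier[simp]: "proj N m F x \<in> carrier_vec N" by (simp add: proj_def)
lemma proj_dim[simp]: "dim_vec (proj N m F x) = N" by (simp add: proj_def)

lemma ip_proj_left: assumes "\<forall>k<m. F k \<in> carrier_vec N" "y \<in> carrier_vec N"
  shows "proj N m F x \<bullet>c y = (\<Sum>j<m. (x \<bullet>c F j) * (F j \<bullet>c y))"
proof -
  have "proj N m F x \<bullet>c y = (\<Sum>r<N. (\<Sum>j<m. (x \<bullet>c F j) * (F j $ r)) * cnj (y$r))"
    by (subst cip[of _ N], auto simp: proj_def assms)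
  also have "\<dots> = (\<Sum>j<m. (x \<bullet>c F j) * (\<Sum>r<N. F j $ r * cnj (y $ r)))"
    by (simp add: sum_distrib_left sum_distrib_right mult.assoc sum.swap[of _ "{..<N}"])
  also have "\<dots> = (\<Sum>j<m. (x \<bullet>c F j) * (F j \<bullet>c y))"
    by (rule sum.cong, simp, subst cip[of _ N], insert assms, auto)
  finally show ?thesis .
qed

lemma ip_proj_right: assumes "\<forall>k<m. F k \<in> carrier_vec N" "y \<in> carrier_vec N"
  shows "y \<bullet>c proj N m F x = (\<Sum>j<m. cnj (x \<bullet>c F j) * (y \<bullet>c F j))"
proof -
  have "y \<bullet>c proj N m F x = (\<Sum>r<N. y $ r * cnj (\<Sum>j<m. (x \<bullet>c F j) * (F j $ r)))"
    by (subst cip[of _ N], auto simp: proj_def assms)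
  also have "\<dots> = (\<Sum>j<m. cnj (x \<bullet>c F j) * (\<Sum>r<N. y $ r * cnj (F j $ r)))"
    by (simp add: sum_distrib_left sum_distrib_right mult.assoc mult.left_commute sum.swap[of _ "{..<N}"])
  also have "\<dots> = (\<Sum>j<m. cnj (x \<bullet>c F j) * (y \<bullet>c F j))"
    by (rule sum.cong, simp, subst cip[of _ N], insert assms, auto)
  finally show ?thesis .
qed

lemma proj_O: assumes "onf N m F" "i < m"
  shows "proj N m F x \<bullet>c F i = x \<bullet>c F i"
proof -
  have "proj N m F x \<bullet>c F i = (\<Sum>j<m. (x \<bullet>c F j) * (if i = j then 1 else 0))"
    using assms unfolding onf_def by (subst ip_proj_left[of _ _ N], auto)
  also have "\<dots> = x \<bullet>c F i" using assms(2) by (simp add: if_distrib sum.delta cong: if_cong)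
  finally show ?thesis .
qed

lemma ip_minus_left: fixes x :: "complex vec" assumes "x \<in> carrier_vec N" "p \<in> carrier_vec N" "y \<in> carrier_vec N"
  shows "(x - p) \<bullet>c y = x \<bullet>c y - p \<bullet>c y"
proof -
  have "(x - p) \<bullet>c y = (\<Sum>r<N. (x$r - p$r) * cnj (y$r))"
    by (subst cip[of _ N], insert assms, auto)
  then show ?thesis by (simp add: cip[OF assms(1,3)] cip[OF assms(2,3)] left_diff_distrib sum_subtractf)
qed

lemma resid_orth: assumes "onf N m F" "i < m" "x \<in> carrier_vec N"
  shows "(x - proj N m F x) \<bullet>c F i = 0"
  using assms proj_O[OF assms(1,2)] ip_minus_left[of x N "proj N m F x" "F i"]
  unfolding onf_def by auto

lemma resid_orth_span: assumes "onf N m F" "x \<in> carrier_vec N" "c \<in> carrier_vec N"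
  "proj N m F c = c"
  shows "(x - proj N m F x) \<bullet>c c = 0"
proof -
  have "(x - proj N m F x) \<bullet>c c = (x - proj N m F x) \<bullet>c proj N m F c" using assms by simp
  also have "\<dots> = (\<Sum>j<m. cnj (c \<bullet>c F j) * ((x - proj N m F x) \<bullet>c F j))"
    using assms unfolding onf_def by (intro ip_proj_right, auto)
  also have "\<dots> = 0" using resid_orth[OF assms(1) _ assms(2)] by simp
  finally show ?thesis .
qed

lemma ip_swap: fixes x :: "complex vec" assumes "x \<in> carrier_vec N" "y \<in> carrier_vec N"
  shows "x \<bullet>c y = cnj (y \<bullet>c x)"
  using assms by (simp add: cip[of _ N] mult.commute)

lemma ip_smult_left: fixes x :: "complex vec" assumes "x \<in> carrier_vec N" "y \<in> carrier_vec N"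
  shows "(c \<cdot>\<^sub>v x) \<bullet>c y = c * (x \<bullet>c y)"
proof -
  have "(c \<cdot>\<^sub>v x) \<bullet>c y = (\<Sum>r<N. (c * x$r) * cnj (y$r))"
    by (subst cip[of _ N], insert assms, auto)
  then show ?thesis by (simp add: cip[OF assms] sum_distrib_left mult.assoc)
qed

lemma ip_smult_right: fixes x :: "complex vec" assumes "x \<in> carrier_vec N" "y \<in> carrier_vec N"
  shows "x \<bullet>c (c \<cdot>\<^sub>v y) = cnj c * (x \<bullet>c y)"
proof -
  have "x \<bullet>c (c \<cdot>\<^sub>v y) = (\<Sum>r<N. x$r * cnj (c * y$r))"
    by (subst cip[of _ N], insert assms, auto)
  then show ?thesis by (simp add: cip[OF assms] sum_distrib_left mult.assoc mult.left_commute)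
qed

definition vclosed :: "nat \<Rightarrow> complex vec set \<Rightarrow> bool" where
  "vclosed N V \<longleftrightarrow> V \<subseteq> carrier_vec N \<and> 0\<^sub>v N \<in> V \<and> (\<forall>x\<in>V. \<forall>y\<in>V. x + y \<in> V)
     \<and> (\<forall>c. \<forall>x\<in>V. c \<cdot>\<^sub>v x \<in> V)"

lemma vclosed_minus: assumes "vclosed N V" "x \<in> V" "y \<in> V" shows "x - y \<in> V"
proof -
  have c: "x \<in> carrier_vec N" "y \<in> carrier_vec N" using assms unfolding vclosed_def by auto
  have "x - y = x + (-1) \<cdot>\<^sub>v y" by (rule eq_vecI, insert c, auto)
  then show ?thesis using assms unfolding vclosed_def by metis
qed

lemma proj_0: "proj N 0 F x = 0\<^sub>v N"
  by (rule eq_vecI, auto simp: proj_def)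

lemma proj_Suc: assumes "F m \<in> carrier_vec N"
  shows "proj N (Suc m) F x = proj N m F x + (x \<bullet>c F m) \<cdot>\<^sub>v F m"
  by (rule eq_vecI, insert assms, auto simp: proj_def)

lemma proj_in: assumes "vclosed N V" "\<forall>k<m. F k \<in> V" shows "proj N m F x \<in> V"
  using assms(2)
proof (induct m)
  case 0 then show ?case using assms(1) by (simp add: proj_0 vclosed_def)
next
  case (Suc m)
  have Fm: "F m \<in> V" using Suc by auto
  then have "F m \<in> carrier_vec N" using assms(1) unfolding vclosed_def by auto
  then show ?case using Suc Fm assms(1) unfolding proj_Suc[of F m N, OF \<open>F m \<in> carrier_vec N\<close>] vclosed_def
    by auto
qed

lemma proj_cong: assumes "\<forall>i<m. F i = G i" shows "proj N m F x = proj N m G x"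
  unfolding proj_def using assms by (intro eq_vecI, auto)

lemma norm_sq: fixes y :: "complex vec" assumes "y \<in> carrier_vec N" "y \<noteq> 0\<^sub>v N"
  shows "\<exists>t>0. y \<bullet>c y = complex_of_real t"
proof -
  define t where "t = (\<Sum>r<N. (cmod (y$r))^2)"
  have "y \<bullet>c y = (\<Sum>r<N. y$r * cnj (y$r))" using cip[OF assms(1) assms(1)] .
  also have "\<dots> = (\<Sum>r<N. complex_of_real ((cmod (y$r))^2))"
    by (rule sum.cong, simp, metis complex_norm_square)
  also have "\<dots> = complex_of_real t" unfolding t_def by simp
  finally have eq: "y \<bullet>c y = complex_of_real t" .
  obtain r where r: "r < N" "y $ r \<noteq> 0" using assms by (metis eq_vecI carrier_vecD index_zero_vec)
  have "t \<ge> (cmod (y$r))^2" unfolding t_def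
    by (rule member_le_sum, insert r, auto)
  moreover have "(cmod (y$r))^2 > 0" using r by auto
  ultimately have "t > 0" by linarith
  then show ?thesis using eq by blast
qed

lemma extend_one: assumes onf: "onf N m F" and x: "x \<in> carrier_vec N" and ne: "proj N m F x \<noteq> x"
  shows "\<exists>c. onf N (Suc m) (F(m := c \<cdot>\<^sub>v (x - proj N m F x)))"
proof -
  define y where "y = x - proj N m F x"
  have y: "y \<in> carrier_vec N" unfolding y_def using x by simp
  have y0: "y \<noteq> 0\<^sub>v N"
  proof
    assume "y = 0\<^sub>v N"
    then have "\<And>i. i < N \<Longrightarrow> (x - proj N m F x) $ i = 0" unfolding y_def by simp
    then have "x = proj N m F x"
      by (intro eq_vecI, insert x, auto)
    then show False using ne by simp
  qed
  have Fc: "\<forall>k<m. F k \<in> carrier_vec N" using onf unfolding onf_def by auto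
  have orth: "y \<bullet>c F i = 0" if "i < m" for i using resid_orth[OF onf that x] unfolding y_def .
  obtain t where t: "t > 0" "y \<bullet>c y = complex_of_real t" using norm_sq[OF y y0] by blast
  define c where "c = complex_of_real (1 / sqrt t)"
  define G where "G = F(m := c \<cdot>\<^sub>v y)"
  have r: "1/sqrt t * (1/sqrt t) * t = 1" using t(1)
  proof -
    have "sqrt t * sqrt t = t" using t(1) by simp
    moreover have "sqrt t > 0" using t(1) by simp
    ultimately show ?thesis by (simp add: field_simps)
  qed
  have cc: "c * cnj c * complex_of_real t = 1" unfolding c_def
    by (metis complex_cnj_complex_of_real of_real_1 of_real_mult r)
  have "onf N (Suc m) G" unfolding onf_def
  proof (intro conjI allI impI)
    fix k assume "k < Suc m" then show "G k \<in> carrier_vec N" using Fc y unfolding G_def by auto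
  next
    fix i j assume i: "i < Suc m" and j: "j < Suc m"
    show "G j \<bullet>c G i = (if i = j then 1 else 0)"
    proof (cases "i = m")
      case True note i = this
      show ?thesis
      proof (cases "j = m")
        case True
        then show ?thesis using i ip_smult_left[OF _ y, of "c \<cdot>\<^sub>v y" ] ip_smult_right[OF y y] t cc y
          unfolding G_def by (auto simp: ip_smult_left[OF y] mult.assoc)
      next
        case False
        then have "j < m" using j by auto
        then have "F j \<bullet>c (c \<cdot>\<^sub>v y) = 0" using ip_smult_right[OF _ y] ip_swap[OF _ y] orth Fc by auto
        then show ?thesis using i False unfolding G_def by auto
      qed
    next
      case False
      then have i': "i < m" using i by auto
      show ?thesis
      proof (cases "j = m")
        case True
        then have "(c \<cdot>\<^sub>v y) \<bullet>c F i = 0" using ip_smult_left[OF y] orth[OF i'] Fc i' by auto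
        then show ?thesis using True False unfolding G_def by auto
      next
        case False
        then show ?thesis using onf i' j \<open>i \<noteq> m\<close> unfolding G_def onf_def by auto
      qed
    qed
  qed
  then show ?thesis unfolding G_def y_def by blast
qed

lemma sum_if_lt: fixes f :: "nat \<Rightarrow> 'a::comm_monoid_add" assumes "N \<le> m"
  shows "(\<Sum>r<m. if r < N then f r else 0) = (\<Sum>r<N. f r)"
proof -
  have "(\<Sum>r<m. if r < N then f r else 0) = (\<Sum>r\<in>{..<m} \<inter> {r. r < N}. f r)"
    by (simp add: sum.inter_restrict)
  also have "{..<m} \<inter> {r. r < N} = {..<N}" using assms by auto
  finally show ?thesis .
qed

lemma mult_entry: fixes A B :: "complex mat"
  assumes "A \<in> carrier_mat n k" "B \<in> carrier_mat k m" "i < n" "j < m"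
  shows "(A * B) $$ (i,j) = (\<Sum>r<k. A $$ (i,r) * B $$ (r,j))"
  using assms by (simp add: scalar_prod_def atLeast0LessThan)

lemma onf_le: assumes onf: "onf N m F" shows "m \<le> N"
proof (rule ccontr)
  assume "\<not> m \<le> N" hence Nm: "N < m" by simp
  define M where "M = mat m m (\<lambda>(r,i). if r < N then F i $ r else 0)"
  define H where "H = mat m m (\<lambda>(i,r). if r < N then cnj (F i $ r) else 0)"
  have M: "M \<in> carrier_mat m m" and H: "H \<in> carrier_mat m m" unfolding M_def H_def by auto
  have "H * M = 1\<^sub>m m"
  proof (rule eq_matI)
    fix i j assume "i < dim_row (1\<^sub>m m)" "j < dim_col (1\<^sub>m m)"
    hence ij: "i<m" "j<m" by auto
    have "(H * M) $$ (i,j) = (\<Sum>r<m. H $$ (i,r) * M $$ (r,j))" by (rule mult_entry[OF H M ij])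
    also have "\<dots> = (\<Sum>r<m. if r < N then F j $ r * cnj (F i $ r) else 0)"
      by (rule sum.cong, insert ij, auto simp: H_def M_def)
    also have "\<dots> = (\<Sum>r<N. F j $ r * cnj (F i $ r))" using Nm by (simp add: sum_if_lt)
    also have "\<dots> = F j \<bullet>c F i" using cip[of "F j" N "F i"] onf ij unfolding onf_def by auto
    also have "\<dots> = 1\<^sub>m m $$ (i,j)" using onf ij unfolding onf_def by auto
    finally show "(H * M) $$ (i,j) = 1\<^sub>m m $$ (i,j)" .
  qed (auto simp: H_def M_def)
  then have MH: "M * H = 1\<^sub>m m" by (rule mat_mult_left_right_inverse[OF H M])
  have "(M * H) $$ (m-1, m-1) = (\<Sum>r<m. M $$ (m-1,r) * H $$ (r,m-1))"
    using Nm by (intro mult_entry[OF M H], auto)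
  also have "\<dots> = 0" using Nm by (intro sum.neutral, auto simp: M_def)
  finally show False using MH Nm by auto
qed

lemma ip_unit: fixes x :: "complex vec" assumes "x \<in> carrier_vec N" "s < N"
  shows "unit_vec N s \<bullet>c x = cnj (x $ s)"
proof -
  have "unit_vec N s \<bullet>c x = (\<Sum>r<N. unit_vec N s $ r * cnj (x $ r))" using assms by (simp add: cip[of _ N])
  also have "\<dots> = (\<Sum>r<N. if r = s then cnj (x $ r) else 0)" by (rule sum.cong, auto simp: unit_vec_def)
  also have "\<dots> = cnj (x $ s)" using assms by simp
  finally show ?thesis .
qed

lemma onf_ge: assumes onf: "onf N m F" and all: "\<forall>x\<in>carrier_vec N. proj N m F x = x"
  shows "N \<le> m"
proof (rule ccontr)
  assume "\<not> N \<le> m" hence Nm: "m < N" by simp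
  define M where "M = mat N N (\<lambda>(r,i). if i < m then F i $ r else 0)"
  define H where "H = mat N N (\<lambda>(i,r). if i < m then cnj (F i $ r) else 0)"
  have M: "M \<in> carrier_mat N N" and H: "H \<in> carrier_mat N N" unfolding M_def H_def by auto
  have Fc: "\<forall>k<m. F k \<in> carrier_vec N" using onf unfolding onf_def by auto
  have "M * H = 1\<^sub>m N"
  proof (rule eq_matI)
    fix r s assume "r < dim_row (1\<^sub>m N)" "s < dim_col (1\<^sub>m N)"
    hence rs: "r<N" "s<N" by auto
    have "(M * H) $$ (r,s) = (\<Sum>i<N. M $$ (r,i) * H $$ (i,s))" by (rule mult_entry[OF M H rs])
    also have "\<dots> = (\<Sum>i<N. if i < m then cnj (F i $ s) * F i $ r else 0)"
      by (rule sum.cong, insert rs, auto simp: H_def M_def)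
    also have "\<dots> = (\<Sum>i<m. cnj (F i $ s) * F i $ r)" using Nm by (simp add: sum_if_lt)
    also have "\<dots> = (\<Sum>i<m. (unit_vec N s \<bullet>c F i) * F i $ r)"
      by (rule sum.cong, insert rs Fc, auto simp: ip_unit)
    also have "\<dots> = proj N m F (unit_vec N s) $ r" using rs by (simp add: proj_def)
    also have "\<dots> = unit_vec N s $ r" using all rs by simp
    also have "\<dots> = 1\<^sub>m N $$ (r,s)" using rs by simp
    finally show "(M * H) $$ (r,s) = 1\<^sub>m N $$ (r,s)" .
  qed (auto simp: H_def M_def)
  then have HM: "H * M = 1\<^sub>m N" by (rule mat_mult_left_right_inverse[OF M H])
  have "(H * M) $$ (N-1, N-1) = (\<Sum>r<N. H $$ (N-1,r) * M $$ (r,N-1))"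
    using Nm by (intro mult_entry[OF H M], auto)
  also have "\<dots> = 0" using Nm by (intro sum.neutral, auto simp: H_def)
  finally show False using HM Nm by auto
qed

lemma ext_onf: assumes V: "vclosed N V" and onf0: "onf N k F0" and in0: "\<forall>i<k. F0 i \<in> V"
  shows "\<exists>m F. k \<le> m \<and> onf N m F \<and> (\<forall>i<k. F i = F0 i) \<and> (\<forall>i<m. F i \<in> V) \<and> (\<forall>x\<in>V. proj N m F x = x)"
proof -
  define P where "P m \<longleftrightarrow> (\<exists>F. k \<le> m \<and> onf N m F \<and> (\<forall>i<k. F i = F0 i) \<and> (\<forall>i<m. F i \<in> V))" for m
  have Pk: "P k" using onf0 in0 unfolding P_def by auto
  have bound: "P m \<Longrightarrow> m \<le> N" for m using onf_le unfolding P_def by auto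
  define m where "m = (GREATEST m. P m)"
  have Pm: "P m" unfolding m_def by (rule GreatestI_nat[where P=P, OF Pk], use bound in auto)
  have mx: "P m' \<Longrightarrow> m' \<le> m" for m' unfolding m_def by (rule Greatest_le_nat[where P=P], use bound in auto)
  obtain F where F: "k \<le> m" "onf N m F" "\<forall>i<k. F i = F0 i" "\<forall>i<m. F i \<in> V" using Pm P_def by auto
  have "\<forall>x\<in>V. proj N m F x = x"
  proof (rule ccontr)
    assume "\<not> (\<forall>x\<in>V. proj N m F x = x)"
    then obtain x where x: "x \<in> V" "proj N m F x \<noteq> x" by auto
    have xc: "x \<in> carrier_vec N" using x V unfolding vclosed_def by auto
    obtain c where c: "onf N (Suc m) (F(m := c \<cdot>\<^sub>v (x - proj N m F x)))"
      using extend_one[OF F(2) xc x(2)] by auto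
    have "c \<cdot>\<^sub>v (x - proj N m F x) \<in> V"
      using vclosed_minus[OF V x(1) proj_in[OF V F(4)]] V unfolding vclosed_def by auto
    then have "P (Suc m)" unfolding P_def using c F
      by (intro exI[of _ "F(m := c \<cdot>\<^sub>v (x - proj N m F x))"]) auto
    then show False using mx by fastforce
  qed
  then show ?thesis using F by blast
qed

lemma mv_entry: fixes a :: "complex mat"
  assumes "a \<in> carrier_mat n k" "x \<in> carrier_vec k" "r < n"
  shows "(a *\<^sub>v x) $ r = (\<Sum>s<k. a $$ (r,s) * x $ s)"
  using assms by (simp add: scalar_prod_def atLeast0LessThan)

lemma adj_carrier: "a \<in> carrier_mat n m \<Longrightarrow> mat_adjoint a \<in> carrier_mat m n"
  unfolding mat_adjoint_def by (auto simp add: mat_of_rows_def)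

lemma adj_entry: "a \<in> carrier_mat n m \<Longrightarrow> i < m \<Longrightarrow> j < n \<Longrightarrow> mat_adjoint a $$ (i,j) = cnj (a $$ (j,i))"
  unfolding mat_adjoint_def by (auto simp add: mat_of_rows_def)

lemma adj_ip: fixes a :: "complex mat" assumes a: "a \<in> carrier_mat n n" and x: "x \<in> carrier_vec n"
  and w: "w \<in> carrier_vec n"
  shows "(a *\<^sub>v x) \<bullet>c w = x \<bullet>c (mat_adjoint a *\<^sub>v w)"
proof -
  have ad: "mat_adjoint a \<in> carrier_mat n n" using adj_carrier[OF a] .
  have "(a *\<^sub>v x) \<bullet>c w = (\<Sum>r<n. (a *\<^sub>v x) $ r * cnj (w $ r))"
    using a x w by (intro cip, auto)
  also have "\<dots> = (\<Sum>r<n. (\<Sum>s<n. a $$ (r,s) * x $ s) * cnj (w $ r))"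
    by (rule sum.cong[OF refl], subst mv_entry[OF a x], auto)
  also have "\<dots> = (\<Sum>r<n. \<Sum>s<n. a $$ (r,s) * x $ s * cnj (w $ r))"
    by (simp add: sum_distrib_right)
  also have "\<dots> = (\<Sum>s<n. \<Sum>r<n. a $$ (r,s) * x $ s * cnj (w $ r))"
    by (rule sum.swap)
  also have "\<dots> = (\<Sum>s<n. x $ s * (\<Sum>r<n. cnj (mat_adjoint a $$ (s,r)) * cnj (w $ r)))"
    by (rule sum.cong[OF refl], simp add: sum_distrib_left, rule sum.cong[OF refl], simp add: adj_entry[OF a])
  also have "\<dots> = (\<Sum>s<n. x $ s * cnj (\<Sum>r<n. mat_adjoint a $$ (s,r) * w $ r))"
    by simp
  also have "\<dots> = (\<Sum>s<n. x $ s * cnj ((mat_adjoint a *\<^sub>v w) $ s))"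
    by (rule sum.cong[OF refl], subst mv_entry[OF ad w], auto)
  also have "\<dots> = x \<bullet>c (mat_adjoint a *\<^sub>v w)"
    using ad x w by (intro cip[symmetric], auto)
  finally show ?thesis .
qed

lemma disconnect:
  assumes n: "n > 0" and Mc: "M \<in> carrier_mat n n" and comm: "\<forall>a\<in>S. M * a = a * M"
  and Sc: "S \<subseteq> carrier_mat n n" and adj: "\<forall>a\<in>S. mat_adjoint a \<in> S"
  and ns: "\<not> (\<exists>c. M = c \<cdot>\<^sub>m 1\<^sub>m n)"
  shows "\<exists>v. orthonormal_basis n v \<and> \<not> graph_connected n (conf_edge n v S)"
proof -
  obtain lam where "lam \<in> spectrum M" using spectrum_non_empty[OF Mc n] by auto
  then obtain e where e: "eigenvector M e lam" unfolding spectrum_def eigenvalue_def by auto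
  have ec: "e \<in> carrier_vec n" and e0: "e \<noteq> 0\<^sub>v n" and Me: "M *\<^sub>v e = lam \<cdot>\<^sub>v e"
    using e Mc unfolding eigenvector_def by auto
  define W where "W = {x \<in> carrier_vec n. M *\<^sub>v x = lam \<cdot>\<^sub>v x}"
  have Wc: "vclosed n W" unfolding vclosed_def W_def
  proof (intro conjI ballI allI)
    show "0\<^sub>v n \<in> {x \<in> carrier_vec n. M *\<^sub>v x = lam \<cdot>\<^sub>v x}" using Mc by auto
  next
    fix x y assume x: "x \<in> {x \<in> carrier_vec n. M *\<^sub>v x = lam \<cdot>\<^sub>v x}"
      and y: "y \<in> {x \<in> carrier_vec n. M *\<^sub>v x = lam \<cdot>\<^sub>v x}"
    then show "x + y \<in> {x \<in> carrier_vec n. M *\<^sub>v x = lam \<cdot>\<^sub>v x}" using Mc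
      by (auto simp: mult_add_distrib_mat_vec smult_add_distrib_vec)
  next
    fix c x assume x: "x \<in> {x \<in> carrier_vec n. M *\<^sub>v x = lam \<cdot>\<^sub>v x}"
    then show "c \<cdot>\<^sub>v x \<in> {x \<in> carrier_vec n. M *\<^sub>v x = lam \<cdot>\<^sub>v x}" using Mc
      by (auto simp: mult_mat_vec smult_smult_assoc mult.commute)
  qed auto
  have inv: "a *\<^sub>v w \<in> W" if a: "a \<in> S" and w: "w \<in> W" for a w
  proof -
    have ac: "a \<in> carrier_mat n n" using a Sc by auto
    have wc: "w \<in> carrier_vec n" using w W_def by auto
    have "M *\<^sub>v (a *\<^sub>v w) = (M * a) *\<^sub>v w" using ac wc Mc by (simp add: assoc_mult_mat_vec)
    also have "\<dots> = (a * M) *\<^sub>v w" using comm a by simp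
    also have "\<dots> = a *\<^sub>v (M *\<^sub>v w)" using ac wc Mc by (simp add: assoc_mult_mat_vec)
    also have "\<dots> = lam \<cdot>\<^sub>v (a *\<^sub>v w)" using w ac wc unfolding W_def by (simp add: mult_mat_vec)
    finally show ?thesis unfolding W_def using ac wc by auto
  qed
  obtain k F1 where F1: "onf n k F1" "\<forall>i<k. F1 i \<in> W" "\<forall>x\<in>W. proj n k F1 x = x"
    using ext_onf[OF Wc, of 0 undefined] by (auto simp: onf_def)
  have Cc: "vclosed n (carrier_vec n)" unfolding vclosed_def by auto
  have F1c: "\<forall>i<k. F1 i \<in> carrier_vec n" using F1 unfolding onf_def by auto
  obtain m F where F: "k \<le> m" "onf n m F" "\<forall>i<k. F i = F1 i" "\<forall>x\<in>carrier_vec n. proj n m F x = x"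
    using ext_onf[OF Cc F1(1) F1c] by blast
  have mn: "m = n" using onf_le[OF F(2)] onf_ge[OF F(2) F(4)] by simp
  have Fc: "\<forall>i<n. F i \<in> carrier_vec n" using F(2) mn unfolding onf_def by auto
  have k0: "k > 0"
  proof (rule ccontr)
    assume "\<not> k > 0" then have "k = 0" by simp
    then have "e = 0\<^sub>v n" using F1(3) ec Me unfolding W_def by (auto simp: proj_0)
    then show False using e0 by simp
  qed
  have kn: "k < n"
  proof (rule ccontr)
    assume "\<not> k < n" then have kn: "k = n" using F(1) mn by simp
    have all: "M *\<^sub>v x = lam \<cdot>\<^sub>v x" if x: "x \<in> carrier_vec n" for x
    proof -
      have "x = proj n n F x" using F(4) x mn by simp
      also have "\<dots> = proj n k F1 x" using F(3) kn proj_cong[of n F F1 n x] by auto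
      finally have xe: "x = proj n k F1 x" .
      have "x \<in> W" using proj_in[OF Wc F1(2), of x] xe by metis
      then show ?thesis unfolding W_def by auto
    qed
    have "M = lam \<cdot>\<^sub>m 1\<^sub>m n"
    proof (rule eq_matI)
      fix i j assume "i < dim_row (lam \<cdot>\<^sub>m 1\<^sub>m n)" "j < dim_col (lam \<cdot>\<^sub>m 1\<^sub>m n)"
      then have ij: "i < n" "j < n" by auto
      have "M $$ (i,j) = (\<Sum>s<n. M $$ (i,s) * unit_vec n j $ s)"
      proof -
        have "(\<Sum>s<n. M $$ (i,s) * unit_vec n j $ s) = (\<Sum>s<n. if s = j then M $$ (i,s) else 0)"
          by (rule sum.cong, auto simp: unit_vec_def)
        then show ?thesis using ij by simp
      qed
      also have "\<dots> = (M *\<^sub>v unit_vec n j) $ i" using ij Mc by (intro mv_entry[symmetric], auto)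
      also have "\<dots> = (lam \<cdot>\<^sub>v unit_vec n j) $ i" using all[of "unit_vec n j"] ij by simp
      also have "\<dots> = (lam \<cdot>\<^sub>m 1\<^sub>m n) $$ (i,j)" using ij by simp
      finally show "M $$ (i,j) = (lam \<cdot>\<^sub>m 1\<^sub>m n) $$ (i,j)" .
    qed (use Mc in auto)
    then show False using ns by blast
  qed
  have orth: "F j \<bullet>c w = 0" if j: "k \<le> j" "j < n" and w: "w \<in> W" for j w
  proof -
    have wc: "w \<in> carrier_vec n" using w W_def by auto
    have "F j \<bullet>c w = F j \<bullet>c proj n k F w"
      using F1(3) w proj_cong[of k F1 F n w] F(3) by auto
    also have "\<dots> = (\<Sum>i<k. cnj (w \<bullet>c F i) * (F j \<bullet>c F i))"
      using Fc kn j by (intro ip_proj_right, auto)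
    also have "\<dots> = 0" using F(2) mn j unfolding onf_def by (intro sum.neutral, auto)
    finally show ?thesis .
  qed
  have perp: "(a *\<^sub>v F j) \<bullet>c w = 0" if a: "a \<in> S" and j: "k \<le> j" "j < n" and w: "w \<in> W" for a j w
  proof -
    have ac: "a \<in> carrier_mat n n" using a Sc by auto
    have wc: "w \<in> carrier_vec n" using w W_def by auto
    have "(a *\<^sub>v F j) \<bullet>c w = F j \<bullet>c (mat_adjoint a *\<^sub>v w)" using adj_ip[OF ac _ wc] Fc j by auto
    also have "\<dots> = 0" using orth[OF j inv[OF adj[rule_format, OF a] w]] .
    finally show ?thesis .
  qed
  let ?E = "conf_edge n F S"
  have reach: "?E\<^sup>*\<^sup>* 0 j \<Longrightarrow> j < k" for j
  proof (induct rule: rtranclp_induct)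
    case base then show ?case using k0 by simp
  next
    case (step i j)
    from step(2) obtain a where a: "a \<in> S" "j < n" "(a *\<^sub>v F j) \<bullet>c F i \<noteq> 0"
      unfolding conf_edge_def by auto
    show ?case
    proof (rule ccontr)
      assume "\<not> j < k"
      then have "(a *\<^sub>v F j) \<bullet>c F i = 0" using perp[OF a(1) _ a(2)] F(3) F1(2) step(3) by auto
      then show False using a(3) by simp
    qed
  qed
  have "\<not> graph_connected n ?E" unfolding graph_connected_def using reach[of k] k0 kn by (meson less_irrefl order.strict_trans)
  moreover have "orthonormal_basis n F" using F(2) mn unfolding onf_def orthonormal_basis_def by auto
  ultimately show ?thesis by blast
qed



definition vm :: "nat \<Rightarrow> complex mat \<Rightarrow> complex vec" where
  "vm n X = vec (n*n) (\<lambda>k. X $$ (k div n, k mod n))"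
definition mv :: "nat \<Rightarrow> complex vec \<Rightarrow> complex mat" where
  "mv n x = mat n n (\<lambda>(i,j). x $ (i*n+j))"

lemma idx_lt: fixes i j n :: nat assumes "i < n" "j < n" shows "i*n+j < n*n"
proof -
  have "i*n + j < i*n + n" using assms by simp
  also have "\<dots> = (i+1)*n" by simp
  also have "\<dots> \<le> n*n" using assms by (intro mult_le_mono1, simp)
  finally show ?thesis .
qed

lemma idx_div[simp]: fixes i j n :: nat assumes "j < n" shows "(i*n+j) div n = i" "(i*n+j) mod n = j"
  using assms by auto

lemma idx_bounds: fixes k n :: nat assumes "k < n*n" shows "k div n < n" "k mod n < n"
proof -
  have n: "n > 0" using assms by (cases n, auto)
  show "k div n < n" using assms by (simp add: less_mult_imp_div_less)
  show "k mod n < n" using n by simp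
qed

lemma vm_carrier[simp]: "vm n X \<in> carrier_vec (n*n)" by (simp add: vm_def)
lemma vm_dim[simp]: "dim_vec (vm n X) = n*n" by (simp add: vm_def)
lemma mv_carrier[simp]: "mv n x \<in> carrier_mat n n" by (simp add: mv_def)
lemma mv_dim[simp]: "dim_row (mv n x) = n" "dim_col (mv n x) = n" by (simp_all add: mv_def)
lemma vm_index: "k < n*n \<Longrightarrow> vm n X $ k = X $$ (k div n, k mod n)" by (simp add: vm_def)
lemma mv_index: "i < n \<Longrightarrow> j < n \<Longrightarrow> mv n x $$ (i,j) = x $ (i*n+j)" by (simp add: mv_def)

lemma mv_vm: assumes "X \<in> carrier_mat n n" shows "mv n (vm n X) = X"
  by (rule eq_matI, insert assms, auto simp: mv_index vm_index idx_lt)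

lemma vm_mv: assumes "x \<in> carrier_vec (n*n)" shows "vm n (mv n x) = x"
  by (rule eq_vecI, insert assms, auto simp: mv_index vm_index idx_bounds)

lemma vm_add: assumes "X \<in> carrier_mat n n" "Y \<in> carrier_mat n n" shows "vm n (X + Y) = vm n X + vm n Y"
  by (rule eq_vecI, insert assms, auto simp: vm_index idx_bounds)

lemma vm_minus: assumes "X \<in> carrier_mat n n" "Y \<in> carrier_mat n n" shows "vm n (X - Y) = vm n X - vm n Y"
  by (rule eq_vecI, insert assms, auto simp: vm_index idx_bounds)

lemma vm_smult: assumes "X \<in> carrier_mat n n" shows "vm n (c \<cdot>\<^sub>m X) = c \<cdot>\<^sub>v vm n X"
  by (rule eq_vecI, insert assms, auto simp: vm_index idx_bounds)

lemma vm_zero: "vm n (0\<^sub>m n n) = 0\<^sub>v (n*n)"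
  by (rule eq_vecI, auto simp: vm_index idx_bounds)

lemma sum_split_add: fixes a n :: nat shows "(\<Sum>k<a+n. f k) = (\<Sum>k<a. f k) + (\<Sum>j<n. f (a+j))"
  by (induct n, auto simp: add_ac)

lemma sum_sq_gen: fixes m n :: nat shows "(\<Sum>k<m*n. f k) = (\<Sum>i<m. \<Sum>j<n. f (i*n+j))"
proof (induct m)
  case 0 then show ?case by simp
next
  case (Suc m)
  have "(\<Sum>k<Suc m * n. f k) = (\<Sum>k<m*n + n. f k)" by (simp add: add.commute)
  also have "\<dots> = (\<Sum>k<m*n. f k) + (\<Sum>j<n. f (m*n+j))" by (rule sum_split_add)
  finally show ?case using Suc by simp
qed

lemma sum_sq: fixes n :: nat shows "(\<Sum>k<n*n. f k) = (\<Sum>i<n. \<Sum>j<n. f (i*n+j))" by (rule sum_sq_gen)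

lemma ip_vm: assumes "X \<in> carrier_mat n n" "Y \<in> carrier_mat n n"
  shows "vm n X \<bullet>c vm n Y = (\<Sum>i<n. \<Sum>j<n. X $$ (i,j) * cnj (Y $$ (i,j)))"
proof -
  have "vm n X \<bullet>c vm n Y = (\<Sum>k<n*n. vm n X $ k * cnj (vm n Y $ k))" by (rule cip, auto)
  also have "\<dots> = (\<Sum>i<n. \<Sum>j<n. vm n X $ (i*n+j) * cnj (vm n Y $ (i*n+j)))" by (rule sum_sq)
  also have "\<dots> = (\<Sum>i<n. \<Sum>j<n. X $$ (i,j) * cnj (Y $$ (i,j)))"
    by (intro sum.cong refl, simp add: vm_index idx_lt)
  finally show ?thesis .
qed



definition Kf :: "nat \<Rightarrow> nat \<Rightarrow> (nat \<Rightarrow> complex vec) \<Rightarrow> nat \<Rightarrow> nat \<Rightarrow> nat \<Rightarrow> complex" where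
  "Kf n m F l j k = (\<Sum>i<m. cnj (F i $ k) * F i $ (l*n+j))"

definition Phi :: "nat \<Rightarrow> nat \<Rightarrow> (nat \<Rightarrow> complex vec) \<Rightarrow> complex mat \<Rightarrow> complex mat" where
  "Phi n m F X = mv n (proj (n*n) m F (vm n X))"

lemma Phi_carrier[simp]: "Phi n m F X \<in> carrier_mat n n" by (simp add: Phi_def)
lemma Phi_dim[simp]: "dim_row (Phi n m F X) = n" "dim_col (Phi n m F X) = n" by (simp_all add: Phi_def)

lemma Phi_entry: assumes Fc: "\<forall>i<m. F i \<in> carrier_vec (n*n)" and l: "l < n" "j < n"
  shows "Phi n m F X $$ (l,j) = (\<Sum>k<n*n. vm n X $ k * Kf n m F l j k)"
proof -
  have "Phi n m F X $$ (l,j) = (\<Sum>i<m. (vm n X \<bullet>c F i) * F i $ (l*n+j))"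
    using l by (simp add: Phi_def mv_index proj_def idx_lt)
  also have "\<dots> = (\<Sum>i<m. (\<Sum>k<n*n. vm n X $ k * cnj (F i $ k)) * F i $ (l*n+j))"
    using Fc by (intro sum.cong refl, subst cip[of _ "n*n"], auto)
  also have "\<dots> = (\<Sum>i<m. \<Sum>k<n*n. vm n X $ k * (cnj (F i $ k) * F i $ (l*n+j)))"
    by (simp add: sum_distrib_right mult.assoc)
  also have "\<dots> = (\<Sum>k<n*n. \<Sum>i<m. vm n X $ k * (cnj (F i $ k) * F i $ (l*n+j)))"
    by (rule sum.swap)
  also have "\<dots> = (\<Sum>k<n*n. vm n X $ k * Kf n m F l j k)"
    unfolding Kf_def by (simp add: sum_distrib_left)
  finally show ?thesis .
qed

lemma Phi_entry2: assumes Fc: "\<forall>i<m. F i \<in> carrier_vec (n*n)" and l: "l < n" "j < n"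
  and X: "X \<in> carrier_mat n n"
  shows "Phi n m F X $$ (l,j) = (\<Sum>p<n. \<Sum>q<n. X $$ (p,q) * Kf n m F l j (p*n+q))"
  unfolding Phi_entry[OF Fc l] sum_sq
  by (intro sum.cong refl, simp add: vm_index idx_lt)

lemma Phi_add: assumes Fc: "\<forall>i<m. F i \<in> carrier_vec (n*n)"
  and X: "X \<in> carrier_mat n n" and Y: "Y \<in> carrier_mat n n"
  shows "Phi n m F (X + Y) = Phi n m F X + Phi n m F Y"
proof (rule eq_matI)
  fix l j assume "l < dim_row (Phi n m F X + Phi n m F Y)" "j < dim_col (Phi n m F X + Phi n m F Y)"
  then have lj: "l < n" "j < n" by auto
  show "Phi n m F (X + Y) $$ (l,j) = (Phi n m F X + Phi n m F Y) $$ (l,j)"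
    using lj X Y
    by (simp add: Phi_entry2[OF Fc lj] distrib_right sum.distrib)
qed auto

lemma Phi_zero: assumes "\<forall>i<m. vm n Z \<bullet>c F i = 0"
  shows "Phi n m F Z = 0\<^sub>m n n"
  by (rule eq_matI, insert assms, auto simp: Phi_def mv_index proj_def idx_lt)

lemma if_mult01: "(if P then (1::complex) else 0) * x = (if P then x else 0)" by simp

lemma sum_delta2: fixes g :: "nat \<Rightarrow> nat \<Rightarrow> complex" assumes "k < n" "i < n"
  shows "(\<Sum>p<n. \<Sum>q<n. (if p = k \<and> q = i then 1 else 0) * g p q) = g k i"
proof -
  have "(\<Sum>p<n. \<Sum>q<n. (if p = k \<and> q = i then 1 else 0) * g p q) = (\<Sum>p<n. if p = k then g k i else 0)"
    using assms by (intro sum.cong refl, auto simp: if_mult01 conj_commute)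
  also have "\<dots> = g k i" using assms by simp
  finally show ?thesis .
qed

lemma ip_move: fixes Z B a :: "complex mat"
  assumes Z: "Z \<in> carrier_mat n n" and B: "B \<in> carrier_mat n n" and a: "a \<in> carrier_mat n n"
  shows "vm n (Z * a) \<bullet>c vm n B = vm n Z \<bullet>c vm n (B * mat_adjoint a)"
proof -
  have ad: "mat_adjoint a \<in> carrier_mat n n" using adj_carrier[OF a] .
  have "vm n (Z * a) \<bullet>c vm n B = (\<Sum>i<n. \<Sum>j<n. (Z * a) $$ (i,j) * cnj (B $$ (i,j)))"
    using Z a B by (intro ip_vm, auto)
  also have "\<dots> = (\<Sum>i<n. \<Sum>j<n. \<Sum>r<n. Z $$ (i,r) * a $$ (r,j) * cnj (B $$ (i,j)))"
    by (intro sum.cong refl, subst mult_entry[OF Z a], auto simp: sum_distrib_right)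
  also have "\<dots> = (\<Sum>i<n. \<Sum>r<n. \<Sum>j<n. Z $$ (i,r) * a $$ (r,j) * cnj (B $$ (i,j)))"
    by (rule sum.cong[OF refl], rule sum.swap)
  also have "\<dots> = (\<Sum>i<n. \<Sum>r<n. Z $$ (i,r) * cnj ((B * mat_adjoint a) $$ (i,r)))"
    by (intro sum.cong refl, subst mult_entry[OF B ad], auto simp: sum_distrib_left adj_entry[OF a] mult_ac)
  also have "\<dots> = vm n Z \<bullet>c vm n (B * mat_adjoint a)"
    using Z ad B by (intro ip_vm[symmetric], auto)
  finally show ?thesis .
qed

lemma comm_or_full:
  assumes n: "n > 0" and Sc: "S \<subseteq> carrier_mat n n" and adj: "\<forall>a\<in>S. mat_adjoint a \<in> S"
  and A: "mat_subspace n A" and AS: "\<forall>X\<in>A. \<forall>a\<in>S. X * a \<in> A" and I: "1\<^sub>m n \<in> A"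
  shows "carrier_mat n n \<subseteq> A \<or> (\<exists>M\<in>carrier_mat n n. (\<forall>a\<in>S. M * a = a * M) \<and> \<not> (\<exists>c. M = c \<cdot>\<^sub>m 1\<^sub>m n))"
proof -
  have Ac: "A \<subseteq> carrier_mat n n" using A unfolding mat_subspace_def by auto
  define V where "V = vm n ` A"
  have Vc: "vclosed (n*n) V" unfolding vclosed_def
  proof (intro conjI ballI allI)
    show "V \<subseteq> carrier_vec (n*n)" unfolding V_def by auto
    show "0\<^sub>v (n*n) \<in> V" unfolding V_def using A vm_zero[of n, symmetric] unfolding mat_subspace_def by auto
  next
    fix x y assume "x \<in> V" "y \<in> V"
    then obtain X Y where "X \<in> A" "Y \<in> A" "x = vm n X" "y = vm n Y" unfolding V_def by auto
    then show "x + y \<in> V" unfolding V_def using A Ac vm_add[of X n Y] unfolding mat_subspace_def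
      by (metis image_eqI subsetD)
  next
    fix c x assume "x \<in> V"
    then obtain X where "X \<in> A" "x = vm n X" unfolding V_def by auto
    then show "c \<cdot>\<^sub>v x \<in> V" unfolding V_def using A Ac vm_smult[of X n c] unfolding mat_subspace_def
      by (metis image_eqI subsetD)
  qed
  obtain m F where F: "onf (n*n) m F" "\<forall>i<m. F i \<in> V" "\<forall>x\<in>V. proj (n*n) m F x = x"
    using ext_onf[OF Vc, of 0 undefined] by (auto simp: onf_def)
  have Fc: "\<forall>i<m. F i \<in> carrier_vec (n*n)" using F unfolding onf_def by auto
  let ?P = "Phi n m F"
  have P1: "?P X \<in> A" for X
  proof -
    have "proj (n*n) m F (vm n X) \<in> V" by (rule proj_in[OF Vc F(2)])
    then obtain Y where Y: "Y \<in> A" "proj (n*n) m F (vm n X) = vm n Y" unfolding V_def by auto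
    then show ?thesis unfolding Phi_def using mv_vm Ac by auto
  qed
  have P2: "?P Y = Y" if Y: "Y \<in> A" for Y
  proof -
    have "vm n Y \<in> V" using Y unfolding V_def by auto
    then show ?thesis unfolding Phi_def using F(3) mv_vm Ac Y by auto
  qed
  have vmP: "vm n (?P X) = proj (n*n) m F (vm n X)" for X
    unfolding Phi_def by (rule vm_mv, simp)
  have Porth: "vm n (X - ?P X) \<bullet>c vm n B = 0" if X: "X \<in> carrier_mat n n" and B: "B \<in> A" for X B
  proof -
    have "vm n (X - ?P X) = vm n X - proj (n*n) m F (vm n X)"
      using vm_minus[OF X Phi_carrier] vmP by simp
    moreover have "vm n B \<in> V" using B unfolding V_def by auto
    ultimately show ?thesis using resid_orth_span[OF F(1) vm_carrier vm_carrier] F(3) by auto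
  qed
  have P4: "?P (X * a) = ?P X * a" if X: "X \<in> carrier_mat n n" and a: "a \<in> S" for X a
  proof -
    have ac: "a \<in> carrier_mat n n" using a Sc by auto
    define Z where "Z = X - ?P X"
    have Zc: "Z \<in> carrier_mat n n" unfolding Z_def using X by auto
    have XZ: "X = ?P X + Z" unfolding Z_def by (rule eq_matI, insert X, auto)
    have "X * a = ?P X * a + Z * a" by (subst XZ, rule add_mult_distrib_mat[OF Phi_carrier Zc ac])
    then have "?P (X * a) = ?P (?P X * a) + ?P (Z * a)"
      using Phi_add[OF Fc mult_carrier_mat[OF Phi_carrier ac] mult_carrier_mat[OF Zc ac]] by simp
    also have "?P (?P X * a) = ?P X * a" using P2 AS P1 a by auto
    also have "?P (Z * a) = 0\<^sub>m n n"
    proof (rule Phi_zero, intro allI impI)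
      fix i assume i: "i < m"
      then obtain B where B: "B \<in> A" "F i = vm n B" using F(2) unfolding V_def by auto
      have Bc: "B \<in> carrier_mat n n" using B Ac by auto
      have "vm n (Z * a) \<bullet>c vm n B = vm n Z \<bullet>c vm n (B * mat_adjoint a)"
        by (rule ip_move[OF Zc Bc ac])
      also have "\<dots> = 0" unfolding Z_def using Porth[OF X] AS B adj a by auto
      finally show "vm n (Z * a) \<bullet>c F i = 0" using B by simp
    qed
    finally show ?thesis using right_add_zero_mat[OF mult_carrier_mat[OF Phi_carrier ac]] by simp
  qed
  define E where "E k i = mat n n (\<lambda>(p,q). if p = k \<and> q = i then (1::complex) else 0)" for k i
  have Ec: "E k i \<in> carrier_mat n n" for k i unfolding E_def by auto
  define Mk where "Mk k l = mat n n (\<lambda>(i,j). ?P (E k i) $$ (l,j))" for k l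
  have Mkc: "Mk k l \<in> carrier_mat n n" for k l unfolding Mk_def by auto
  have PE: "?P (E k i) $$ (l,j) = Kf n m F l j (k*n+i)" if "k < n" "i < n" "l < n" "j < n" for k i l j
  proof -
    have "?P (E k i) $$ (l,j) = (\<Sum>p<n. \<Sum>q<n. (if p = k \<and> q = i then 1 else 0) * Kf n m F l j (p*n+q))"
      using that by (subst Phi_entry2[OF Fc _ _ Ec], auto simp: E_def)
    also have "\<dots> = Kf n m F l j (k*n+i)" using sum_delta2[OF that(1,2), of "\<lambda>p q. Kf n m F l j (p*n+q)"] by simp
    finally show ?thesis .
  qed
  have comm: "Mk k l * a = a * Mk k l" if kl: "k < n" "l < n" and a: "a \<in> S" for k l a
  proof (rule eq_matI)
    have ac: "a \<in> carrier_mat n n" using a Sc by auto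
    fix i j assume "i < dim_row (a * Mk k l)" "j < dim_col (a * Mk k l)"
    then have ij: "i < n" "j < n" using ac Mkc[of k l] by auto
    have "(Mk k l * a) $$ (i,j) = (\<Sum>q<n. ?P (E k i) $$ (l,q) * a $$ (q,j))"
      using ij by (subst mult_entry[OF Mkc ac], auto simp: Mk_def)
    also have "\<dots> = (?P (E k i) * a) $$ (l,j)"
      using ij kl by (subst mult_entry[OF Phi_carrier ac], auto)
    also have "\<dots> = ?P (E k i * a) $$ (l,j)" using P4[OF Ec a] by simp
    also have "\<dots> = (\<Sum>p<n. \<Sum>q<n. (E k i * a) $$ (p,q) * Kf n m F l j (p*n+q))"
      using ij kl mult_carrier_mat[OF Ec ac] by (intro Phi_entry2[OF Fc], auto)
    also have "\<dots> = (\<Sum>p<n. if p = k then (\<Sum>q<n. a $$ (i,q) * Kf n m F l j (k*n+q)) else 0)"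
    proof (intro sum.cong refl)
      fix p assume p: "p \<in> {..<n}"
      have Eq: "(E k i * a) $$ (p,q) = (if p = k then a $$ (i,q) else 0)" if q: "q < n" for q
      proof -
        have "(E k i * a) $$ (p,q) = (\<Sum>r<n. E k i $$ (p,r) * a $$ (r,q))"
          using p q by (intro mult_entry[OF Ec ac], auto)
        also have "\<dots> = (\<Sum>r<n. if r = i then (if p = k then a $$ (r,q) else 0) else 0)"
          using p by (intro sum.cong refl, auto simp: E_def)
        also have "\<dots> = (if p = k then a $$ (i,q) else 0)" using ij by simp
        finally show ?thesis .
      qed
      show "(\<Sum>q<n. (E k i * a) $$ (p,q) * Kf n m F l j (p*n+q)) =
        (if p = k then (\<Sum>q<n. a $$ (i,q) * Kf n m F l j (k*n+q)) else 0)"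
        using Eq by auto
    qed
    also have "\<dots> = (\<Sum>q<n. a $$ (i,q) * Kf n m F l j (k*n+q))" using kl by simp
    also have "\<dots> = (\<Sum>q<n. a $$ (i,q) * Mk k l $$ (q,j))"
      using ij kl by (intro sum.cong refl, auto simp: Mk_def PE)
    also have "\<dots> = (a * Mk k l) $$ (i,j)" using ij by (subst mult_entry[OF ac Mkc], auto)
    finally show "(Mk k l * a) $$ (i,j) = (a * Mk k l) $$ (i,j)" .
  qed (insert Mkc[of k l] Sc a, auto)
  show ?thesis
  proof (cases "\<forall>k<n. \<forall>l<n. \<exists>c. Mk k l = c \<cdot>\<^sub>m 1\<^sub>m n")
    case True
    define c where "c k l = Mk k l $$ (0,0)" for k l
    have cM: "Mk k l = c k l \<cdot>\<^sub>m 1\<^sub>m n" if kl: "k < n" "l < n" for k l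
    proof -
      obtain d where d: "Mk k l = d \<cdot>\<^sub>m 1\<^sub>m n" using True kl by auto
      then have "c k l = d" unfolding c_def using n by simp
      then show ?thesis using d by simp
    qed
    have KK: "Kf n m F l j (p*n+q) = c p l * (if q = j then 1 else 0)"
      if "p < n" "q < n" "l < n" "j < n" for p q l j
    proof -
      have "Kf n m F l j (p*n+q) = ?P (E p q) $$ (l,j)" using PE that by simp
      also have "\<dots> = Mk p l $$ (q,j)" using that by (simp add: Mk_def)
      also have "\<dots> = c p l * (if q = j then 1 else 0)" using cM that by simp
      finally show ?thesis .
    qed
    have PX: "?P X $$ (l,j) = (\<Sum>p<n. X $$ (p,j) * c p l)"
      if X: "X \<in> carrier_mat n n" and lj: "l < n" "j < n" for X l j
    proof -
      have "?P X $$ (l,j) = (\<Sum>p<n. \<Sum>q<n. X $$ (p,q) * Kf n m F l j (p*n+q))"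
        by (rule Phi_entry2[OF Fc lj X])
      also have "\<dots> = (\<Sum>p<n. \<Sum>q<n. if q = j then X $$ (p,q) * c p l else 0)"
        using lj by (intro sum.cong refl, auto simp: KK)
      also have "\<dots> = (\<Sum>p<n. X $$ (p,j) * c p l)" using lj by simp
      finally show ?thesis .
    qed
    have c1: "c j l = (if l = j then 1 else 0)" if lj: "l < n" "j < n" for l j
    proof -
      have "(if l = j then 1 else 0) = ?P (1\<^sub>m n) $$ (l,j)" using P2[OF I] lj by simp
      also have "\<dots> = (\<Sum>p<n. 1\<^sub>m n $$ (p,j) * c p l)" by (rule PX[OF _ lj], simp)
      also have "\<dots> = (\<Sum>p<n. if p = j then c p l else 0)" using lj by (intro sum.cong refl, auto)
      also have "\<dots> = c j l" using lj by simp
      finally show ?thesis by simp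
    qed
    have "X \<in> A" if X: "X \<in> carrier_mat n n" for X
    proof -
      have "?P X = X"
      proof (rule eq_matI)
        fix l j assume "l < dim_row X" "j < dim_col X"
        then have lj: "l < n" "j < n" using X by auto
        have "?P X $$ (l,j) = (\<Sum>p<n. X $$ (p,j) * c p l)" by (rule PX[OF X lj])
        also have "\<dots> = (\<Sum>p<n. if p = l then X $$ (p,j) else 0)"
          using lj by (intro sum.cong refl, auto simp: c1)
        also have "\<dots> = X $$ (l,j)" using lj by simp
        finally show "?P X $$ (l,j) = X $$ (l,j)" .
      qed (use X in auto)
      then show ?thesis using P1[of X] by simp
    qed
    then show ?thesis by blast
  next
    case False
    then obtain k l where "k < n" "l < n" "\<not> (\<exists>c. Mk k l = c \<cdot>\<^sub>m 1\<^sub>m n)" by auto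
    then show ?thesis using Mkc comm by blast
  qed
qed



lemma span_sub: assumes "T \<subseteq> carrier_mat n n" shows "mat_span n T \<subseteq> carrier_mat n n"
proof
  fix X assume "X \<in> mat_span n T"
  then show "X \<in> carrier_mat n n"
    by (induct rule: mat_span.induct, insert assms, auto)
qed

lemma span_subspace: assumes "T \<subseteq> carrier_mat n n" shows "mat_subspace n (mat_span n T)"
  unfolding mat_subspace_def using span_sub[OF assms]
  by (auto intro: mat_span.intros)

lemma prod_sub: assumes "T \<subseteq> carrier_mat n n" "S \<subseteq> carrier_mat n n"
  shows "{A * B | A B. A \<in> T \<and> B \<in> S} \<subseteq> carrier_mat n n"
proof
  fix X assume "X \<in> {A * B | A B. A \<in> T \<and> B \<in> S}"
  then obtain A B where "X = A * B" "A \<in> T" "B \<in> S" by blast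
  then show "X \<in> carrier_mat n n" using assms by (metis mult_carrier_mat subsetD)
qed

lemma S_carrier: "quantum_graph n S \<Longrightarrow> S \<subseteq> carrier_mat n n"
  unfolding quantum_graph_def mat_subspace_def by simp

lemma pow_carrier: assumes "quantum_graph n S" shows "qg_pow n S k \<subseteq> carrier_mat n n"
proof (induct k)
  case 0 then show ?case using assms unfolding quantum_graph_def mat_subspace_def by auto
next
  case (Suc k)
  have "{A * B | A B. A \<in> qg_pow n S k \<and> B \<in> S} \<subseteq> carrier_mat n n"
    by (rule prod_sub[OF Suc S_carrier[OF assms]])
  then show ?case by (simp add: span_sub)
qed

lemma pow_subspace: assumes "quantum_graph n S" shows "mat_subspace n (qg_pow n S k)"
proof (cases k)
  case 0 then show ?thesis using assms unfolding quantum_graph_def by simp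
next
  case (Suc k)
  have "{A * B | A B. A \<in> qg_pow n S k \<and> B \<in> S} \<subseteq> carrier_mat n n"
    by (rule prod_sub[OF pow_carrier[OF assms] S_carrier[OF assms]])
  then show ?thesis using Suc by (simp add: span_subspace)
qed

lemma pow_mono1: assumes "quantum_graph n S" shows "qg_pow n S k \<subseteq> qg_pow n S (Suc k)"
proof
  fix X assume X: "X \<in> qg_pow n S k"
  have Xc: "X \<in> carrier_mat n n" using subsetD[OF pow_carrier[OF assms, of k] X] .
  have "X = X * 1\<^sub>m n" using Xc by simp
  moreover have "1\<^sub>m n \<in> S" using assms unfolding quantum_graph_def by auto
  ultimately have "X \<in> {A * B | A B. A \<in> qg_pow n S k \<and> B \<in> S}" using X by blast
  then show "X \<in> qg_pow n S (Suc k)" by (auto intro: mat_span.gen)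
qed

lemma S_sub_pow: assumes "quantum_graph n S" shows "S \<subseteq> qg_pow n S k"
proof (induct k)
  case 0 then show ?case by simp
next
  case (Suc k) then show ?case using pow_mono1[OF assms, of k] by auto
qed

lemma vclosed_vm: assumes A: "mat_subspace n A" shows "vclosed (n*n) (vm n ` A)"
proof -
  have Ac: "A \<subseteq> carrier_mat n n" using A unfolding mat_subspace_def by auto
  show ?thesis unfolding vclosed_def
  proof (intro conjI ballI allI)
    show "vm n ` A \<subseteq> carrier_vec (n*n)" by auto
    show "0\<^sub>v (n*n) \<in> vm n ` A" using A vm_zero[of n, symmetric] unfolding mat_subspace_def by auto
  next
    fix x y assume "x \<in> vm n ` A" "y \<in> vm n ` A"
    then obtain X Y where "X \<in> A" "Y \<in> A" "x = vm n X" "y = vm n Y" by auto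
    then show "x + y \<in> vm n ` A" using A Ac vm_add[of X n Y] unfolding mat_subspace_def
      by (metis image_eqI subsetD)
  next
    fix c x assume "x \<in> vm n ` A"
    then obtain X where "X \<in> A" "x = vm n X" by auto
    then show "c \<cdot>\<^sub>v x \<in> vm n ` A" using A Ac vm_smult[of X n c] unfolding mat_subspace_def
      by (metis image_eqI subsetD)
  qed
qed

lemma stab: assumes qg: "quantum_graph n S" shows "\<exists>k. qg_pow n S (Suc k) = qg_pow n S k"
proof (rule ccontr)
  assume "\<not> ?thesis"
  then have ne: "\<forall>k. \<exists>X \<in> qg_pow n S (Suc k). X \<notin> qg_pow n S k" using pow_mono1[OF qg] by blast
  let ?V = "\<lambda>k. vm n ` qg_pow n S k"
  have Vc: "vclosed (n*n) (?V k)" for k by (rule vclosed_vm[OF pow_subspace[OF qg]])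
  have claim: "\<exists>m F. k \<le> m \<and> onf (n*n) m F \<and> (\<forall>i<m. F i \<in> ?V k)" for k
  proof (induct k)
    case 0 then show ?case by (intro exI[of _ 0], auto simp: onf_def)
  next
    case (Suc k)
    then obtain m F where mF: "k \<le> m" "onf (n*n) m F" "\<forall>i<m. F i \<in> ?V k" by auto
    obtain m' F' where F': "m \<le> m'" "onf (n*n) m' F'" "\<forall>i<m'. F' i \<in> ?V k"
      "\<forall>x\<in>?V k. proj (n*n) m' F' x = x"
      using ext_onf[OF Vc mF(2) mF(3)] by blast
    obtain X where X: "X \<in> qg_pow n S (Suc k)" "X \<notin> qg_pow n S k" using ne by auto
    have Xc: "X \<in> carrier_mat n n" using subsetD[OF pow_carrier[OF qg, of "Suc k"] X(1)] .
    have pin: "proj (n*n) m' F' (vm n X) \<in> ?V k" by (rule proj_in[OF Vc F'(3)])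
    have neq: "proj (n*n) m' F' (vm n X) \<noteq> vm n X"
    proof
      assume eq: "proj (n*n) m' F' (vm n X) = vm n X"
      then obtain Y where Y: "Y \<in> qg_pow n S k" "vm n X = vm n Y" using pin by auto
      have Yc: "Y \<in> carrier_mat n n" using Y pow_carrier[OF qg] by auto
      have "X = mv n (vm n X)" using mv_vm[OF Xc] by simp
      also have "\<dots> = mv n (vm n Y)" using Y by simp
      also have "\<dots> = Y" using mv_vm[OF Yc] .
      finally have "X = Y" .
      then show False using X Y by simp
    qed
    obtain c where c: "onf (n*n) (Suc m') (F'(m' := c \<cdot>\<^sub>v (vm n X - proj (n*n) m' F' (vm n X))))"
      using extend_one[OF F'(2) vm_carrier neq] by blast
    have sub: "?V k \<subseteq> ?V (Suc k)" using pow_mono1[OF qg] by auto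
    have "vm n X - proj (n*n) m' F' (vm n X) \<in> ?V (Suc k)"
    proof (rule vclosed_minus[OF Vc])
      show "vm n X \<in> ?V (Suc k)" using X(1) by blast
      show "proj (n*n) m' F' (vm n X) \<in> ?V (Suc k)" using pin sub by blast
    qed
    then have "c \<cdot>\<^sub>v (vm n X - proj (n*n) m' F' (vm n X)) \<in> ?V (Suc k)"
      using Vc[of "Suc k"] unfolding vclosed_def by blast
    moreover have "\<forall>i<m'. F' i \<in> ?V (Suc k)" using F'(3) sub by auto
    ultimately have "\<forall>i<Suc m'. (F'(m' := c \<cdot>\<^sub>v (vm n X - proj (n*n) m' F' (vm n X)))) i \<in> ?V (Suc k)"
      by (auto simp: less_Suc_eq)
    moreover have "Suc k \<le> Suc m'" using F'(1) mF(1) by simp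
    ultimately show ?case using c by blast
  qed
  from claim[of "n*n+1"] obtain m F where "n*n+1 \<le> m" "onf (n*n) m F" by auto
  then show False using onf_le by fastforce
qed



lemma fwd: assumes qg: "quantum_graph n S" and full: "qg_pow n S k = carrier_mat n n"
  and v: "orthonormal_basis n v"
  shows "graph_connected n (conf_edge n v S)"
proof (rule ccontr)
  let ?E = "conf_edge n v S"
  assume "\<not> ?thesis"
  then obtain i0 j0 where ij0: "i0 < n" "j0 < n" "\<not> ?E\<^sup>*\<^sup>* i0 j0" unfolding graph_connected_def by auto
  define P where "P = {i. ?E\<^sup>*\<^sup>* i0 i}"
  have vc: "\<forall>k<n. v k \<in> carrier_vec n" and vo: "\<forall>i<n. \<forall>j<n. v j \<bullet>c v i = (if i = j then 1 else 0)"
    using v unfolding orthonormal_basis_def by auto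
  define U where "U = mat n n (\<lambda>(i,j). v j $ i)"
  define H where "H = mat n n (\<lambda>(i,j). cnj (v i $ j))"
  have Uc: "U \<in> carrier_mat n n" and Hc: "H \<in> carrier_mat n n" unfolding U_def H_def by auto
  have HU: "H * U = 1\<^sub>m n"
  proof (rule eq_matI)
    fix i j assume "i < dim_row (1\<^sub>m n)" "j < dim_col (1\<^sub>m n)"
    then have ij: "i < n" "j < n" by auto
    have "(H * U) $$ (i,j) = (\<Sum>r<n. H $$ (i,r) * U $$ (r,j))" by (rule mult_entry[OF Hc Uc ij])
    also have "\<dots> = (\<Sum>r<n. v j $ r * cnj (v i $ r))"
      using ij by (intro sum.cong refl, auto simp: H_def U_def)
    also have "\<dots> = v j \<bullet>c v i" using vc ij by (intro cip[symmetric], auto)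
    also have "\<dots> = 1\<^sub>m n $$ (i,j)" using vo ij by auto
    finally show "(H * U) $$ (i,j) = 1\<^sub>m n $$ (i,j)" .
  qed (use Hc Uc in auto)
  have UH: "U * H = 1\<^sub>m n" by (rule mat_mult_left_right_inverse[OF Hc Uc HU])
  have key: "(H * X * U) $$ (i,j) = (X *\<^sub>v v j) \<bullet>c v i"
    if X: "X \<in> carrier_mat n n" and ij: "i < n" "j < n" for X i j
  proof -
    have HX: "H * X \<in> carrier_mat n n" using Hc X by auto
    have "(H * X * U) $$ (i,j) = (\<Sum>r<n. (H * X) $$ (i,r) * U $$ (r,j))" by (rule mult_entry[OF HX Uc ij])
    also have "\<dots> = (\<Sum>r<n. \<Sum>s<n. cnj (v i $ s) * X $$ (s,r) * v j $ r)"
      using ij by (intro sum.cong refl, subst mult_entry[OF Hc X], auto simp: H_def U_def sum_distrib_right)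
    also have "\<dots> = (\<Sum>s<n. \<Sum>r<n. cnj (v i $ s) * X $$ (s,r) * v j $ r)" by (rule sum.swap)
    also have "\<dots> = (\<Sum>s<n. (X *\<^sub>v v j) $ s * cnj (v i $ s))"
      using ij vc by (intro sum.cong refl, subst mv_entry[OF X], auto simp: sum_distrib_right sum_distrib_left mult_ac)
    also have "\<dots> = (X *\<^sub>v v j) \<bullet>c v i" using vc ij X by (intro cip[symmetric], auto)
    finally show ?thesis .
  qed
  define Psi where "Psi X \<longleftrightarrow> X \<in> carrier_mat n n \<and>
     (\<forall>i<n. \<forall>j<n. i \<in> P \<longrightarrow> j \<notin> P \<longrightarrow> (H * X * U) $$ (i,j) = 0)" for X
  have Sc: "S \<subseteq> carrier_mat n n" by (rule S_carrier[OF qg])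
  have PsiS: "Psi a" if a: "a \<in> S" for a
  proof -
    have ac: "a \<in> carrier_mat n n" using a Sc by auto
    have "(H * a * U) $$ (i,j) = 0" if ij: "i < n" "j < n" "i \<in> P" "j \<notin> P" for i j
    proof (rule ccontr)
      assume ne: "(H * a * U) $$ (i,j) \<noteq> 0"
      have "i \<noteq> j" using ij by auto
      then have "?E i j" using ne key[OF ac ij(1,2)] a ij unfolding conf_edge_def by auto
      then have "j \<in> P" using ij(3) unfolding P_def by auto
      then show False using ij by simp
    qed
    then show ?thesis unfolding Psi_def using ac by auto
  qed
  have Psi_span: "Psi X" if T: "\<forall>X\<in>T. Psi X" and X: "X \<in> mat_span n T" for T X
    using X
  proof (induct rule: mat_span.induct)
    case zero
    then show ?case unfolding Psi_def using Hc Uc by auto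
  next
    case (gen A) then show ?case using T by auto
  next
    case (add A B)
    then have Ac: "A \<in> carrier_mat n n" and Bc: "B \<in> carrier_mat n n" unfolding Psi_def by auto
    have "H * (A + B) * U = H * A * U + H * B * U"
      using Hc Uc Ac Bc by (simp add: mult_add_distrib_mat add_mult_distrib_mat[of _ n n _ _ n])
    then show ?case using add Ac Bc Hc Uc unfolding Psi_def by auto
  next
    case (smult A c)
    then have Ac: "A \<in> carrier_mat n n" unfolding Psi_def by auto
    have "H * (c \<cdot>\<^sub>m A) * U = c \<cdot>\<^sub>m (H * A * U)"
      using Hc Uc Ac by (simp add: mult_smult_distrib mult_smult_assoc_mat[of _ n n _ n])
    then show ?case using smult Ac Hc Uc unfolding Psi_def by auto
  qed
  have Psi_mult: "Psi (X * Y)" if PX: "Psi X" and PY: "Psi Y" for X Y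
  proof -
    have Xc: "X \<in> carrier_mat n n" and Yc: "Y \<in> carrier_mat n n" using PX PY unfolding Psi_def by auto
    have HX: "H * X \<in> carrier_mat n n" using Hc Xc by auto
    have YU: "Y * U \<in> carrier_mat n n" using Uc Yc by auto
    have eq: "H * (X * Y) * U = (H * X * U) * (H * Y * U)"
    proof -
      have "(H * X * U) * (H * Y * U) = (H * X * U) * (H * (Y * U))"
        using assoc_mult_mat[OF Hc Yc Uc] by simp
      also have "\<dots> = (H * X) * (U * (H * (Y * U)))"
        using assoc_mult_mat[OF HX Uc mult_carrier_mat[OF Hc YU]] by simp
      also have "U * (H * (Y * U)) = (U * H) * (Y * U)"
        using assoc_mult_mat[OF Uc Hc YU] by simp
      also have "\<dots> = Y * U" using UH left_mult_one_mat[OF YU] by simp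
      also have "(H * X) * (Y * U) = H * X * Y * U"
        using assoc_mult_mat[OF HX Yc Uc] by simp
      also have "\<dots> = H * (X * Y) * U" using assoc_mult_mat[OF Hc Xc Yc] by simp
      finally show ?thesis by simp
    qed
    have "(H * (X * Y) * U) $$ (i,j) = 0" if ij: "i < n" "j < n" "i \<in> P" "j \<notin> P" for i j
    proof -
      have c1: "H * X * U \<in> carrier_mat n n" and c2: "H * Y * U \<in> carrier_mat n n"
        using Hc Uc Xc Yc by auto
      have "(H * (X * Y) * U) $$ (i,j) = (\<Sum>r<n. (H * X * U) $$ (i,r) * (H * Y * U) $$ (r,j))"
        unfolding eq by (rule mult_entry[OF c1 c2 ij(1,2)])
      also have "\<dots> = 0"
      proof (rule sum.neutral, intro ballI)
        fix r assume r: "r \<in> {..<n}"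
        show "(H * X * U) $$ (i,r) * (H * Y * U) $$ (r,j) = 0"
        proof (cases "r \<in> P")
          case True then show ?thesis using PY ij r unfolding Psi_def by auto
        next
          case False then show ?thesis using PX ij r unfolding Psi_def by auto
        qed
      qed
      finally show ?thesis .
    qed
    then show ?thesis unfolding Psi_def using Xc Yc by auto
  qed
  have Psi_pow: "\<forall>X \<in> qg_pow n S k'. Psi X" for k'
  proof (induct k')
    case 0 then show ?case using PsiS by simp
  next
    case (Suc k')
    have T: "\<forall>X\<in>{A * B | A B. A \<in> qg_pow n S k' \<and> B \<in> S}. Psi X"
      using Suc PsiS Psi_mult by blast
    show ?case
    proof
      fix X assume "X \<in> qg_pow n S (Suc k')"
      then have "X \<in> mat_span n {A * B | A B. A \<in> qg_pow n S k' \<and> B \<in> S}" by simp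
      then show "Psi X" by (rule Psi_span[OF T])
    qed
  qed
  define Em where "Em = mat n n (\<lambda>(p,q). if p = i0 \<and> q = j0 then (1::complex) else 0)"
  have Emc: "Em \<in> carrier_mat n n" unfolding Em_def by auto
  have EH: "Em * H \<in> carrier_mat n n" using Emc Hc by auto
  define X0 where "X0 = U * (Em * H)"
  have X0c: "X0 \<in> carrier_mat n n" unfolding X0_def using Uc EH by auto
  have HXU: "H * X0 * U = Em"
  proof -
    have "H * X0 * U = (H * U) * (Em * H) * U"
      unfolding X0_def using assoc_mult_mat[OF Hc Uc EH] by simp
    also have "\<dots> = Em * H * U" using HU left_mult_one_mat[OF EH] by simp
    also have "\<dots> = Em * (H * U)" using assoc_mult_mat[OF Emc Hc Uc] by simp
    also have "\<dots> = Em" using HU right_mult_one_mat[OF Emc] by simp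
    finally show ?thesis .
  qed
  have PX0: "Psi X0" using Psi_pow[of k] X0c full by auto
  have P0: "i0 \<in> P" "j0 \<notin> P" using ij0 unfolding P_def by auto
  have "(H * X0 * U) $$ (i0,j0) = 0" using PX0 ij0(1,2) P0 unfolding Psi_def by blast
  moreover have "Em $$ (i0,j0) = 1" using ij0 unfolding Em_def by simp
  ultimately show False using HXU by simp
qed

theorem proposition3p6:
  fixes n :: nat and S :: "complex mat set"
  assumes "quantum_graph n S"
  shows "qg_connected n S \<longleftrightarrow>
           (\<forall>v. orthonormal_basis n v \<longrightarrow> graph_connected n (conf_edge n v S))"
proof (cases "n = 0")
  case True
  have "carrier_mat n n \<subseteq> S"
  proof
    fix X :: "complex mat" assume "X \<in> carrier_mat n n"
    then have "X = 1\<^sub>m n" using True by (intro eq_matI, auto)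
    then show "X \<in> S" using assms unfolding quantum_graph_def by simp
  qed
  then have "qg_pow n S 0 = carrier_mat n n" using S_carrier[OF assms] by auto
  then have "qg_connected n S" unfolding qg_connected_def by blast
  moreover have "graph_connected n E" for E using True unfolding graph_connected_def by auto
  ultimately show ?thesis by auto
next
  case False
  then have n: "n > 0" by simp
  have Sc: "S \<subseteq> carrier_mat n n" by (rule S_carrier[OF assms])
  have adj: "\<forall>a\<in>S. mat_adjoint a \<in> S" using assms unfolding quantum_graph_def by auto
  show ?thesis
  proof
    assume "qg_connected n S"
    then obtain k where "qg_pow n S k = carrier_mat n n" unfolding qg_connected_def by auto
    then show "\<forall>v. orthonormal_basis n v \<longrightarrow> graph_connected n (conf_edge n v S)"
      using fwd[OF assms] by blast
  next
    assume R: "\<forall>v. orthonormal_basis n v \<longrightarrow> graph_connected n (conf_edge n v S)"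
    obtain k where k: "qg_pow n S (Suc k) = qg_pow n S k" using stab[OF assms] by blast
    have AS: "\<forall>X\<in>qg_pow n S k. \<forall>a\<in>S. X * a \<in> qg_pow n S k"
    proof (intro ballI)
      fix X a assume "X \<in> qg_pow n S k" "a \<in> S"
      then have "X * a \<in> {A * B | A B. A \<in> qg_pow n S k \<and> B \<in> S}" by blast
      then have "X * a \<in> qg_pow n S (Suc k)" by (auto intro: mat_span.gen)
      then show "X * a \<in> qg_pow n S k" using k by simp
    qed
    have I: "1\<^sub>m n \<in> qg_pow n S k" using S_sub_pow[OF assms] assms unfolding quantum_graph_def by auto
    from comm_or_full[OF n Sc adj pow_subspace[OF assms] AS I]
    show "qg_connected n S"
    proof
      assume "carrier_mat n n \<subseteq> qg_pow n S k"
      then have "qg_pow n S k = carrier_mat n n" using pow_carrier[OF assms, of k] by auto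
      then show ?thesis unfolding qg_connected_def by blast
    next
      assume "\<exists>M\<in>carrier_mat n n. (\<forall>a\<in>S. M * a = a * M) \<and> \<not> (\<exists>c. M = c \<cdot>\<^sub>m 1\<^sub>m n)"
      then obtain M where M: "M \<in> carrier_mat n n" "\<forall>a\<in>S. M * a = a * M" "\<not> (\<exists>c. M = c \<cdot>\<^sub>m 1\<^sub>m n)"
        by blast
      from disconnect[OF n M(1) M(2) Sc adj M(3)] R show ?thesis by blast
    qed
  qed
qed


end
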